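(* For any integers $n, d \geq 2$ with $\gcd(d,n) = 1$, we have $\max S_{d,n} = nd - n - d$.
   Context: For integers $d,n \geq 2$ with $\gcd(n,d)=1$, let $n^\ast \in \{1,\dots,d-1\}$ be the unique integer with $n^\ast \equiv -n \pmod d$, and define $S_{d,n} = \{ n^\ast + jd : j \in \mathbb{Z}_{\geq 0},\ n^\ast + jd < n(d-1)\}$. *)

theory Defs
  imports Main
begin

definition nstar :: "int \<Rightarrow> int \<Rightarrow> int" where
  "nstar d n = (THE m. m \<in> {1..d-1} \<and> m mod d = (- n) mod d)"

definition S_set :: "int \<Rightarrow> int \<Rightarrow> int set" where
  "S_set d n = {nstar d n + int j * d | j :: nat. nstar d n + int j * d < n * (d - 1)}"

end

theory Submission
  imports Defs
begin

lemma nstar_eq: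
  fixes n d :: int
  assumes "d \<ge> 2" and "gcd d n = 1"
  shows "nstar d n = (- n) mod d" and "1 \<le> (- n) mod d" and "(- n) mod d \<le> d - 1"
proof -
  have nd: "\<not> d dvd n"
  proof
    assume "d dvd n" then have "gcd d n = \<bar>d\<bar>" by (simp add: gcd_proj1_iff)
    with assms show False by simp
  qed
  have "(- n) mod d \<noteq> 0" using nd by (simp add: dvd_eq_mod_eq_0[symmetric])
  moreover have "(- n) mod d \<ge> 0" "(- n) mod d < d" using assms by auto
  ultimately show 1: "1 \<le> (- n) mod d" and 2: "(- n) mod d \<le> d - 1" by auto
  show "nstar d n = (- n) mod d" unfolding nstar_def
  proof (rule the_equality)
    show "(- n) mod d \<in> {1..d - 1} \<and> (- n) mod d mod d = - n mod d" using 1 2 by simp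
  next
    fix m assume "m \<in> {1..d - 1} \<and> m mod d = - n mod d"
    then show "m = (- n) mod d" by (metis atLeastAtMost_iff mod_pos_pos_trivial
          less_le_trans zero_less_one diff_less zero_less_one le_less_trans order.strict_iff_not
          linorder_not_less not_le zle_diff1_eq)
  qed
qed

theorem lemma3p3:
  fixes n d :: int
  assumes "n \<ge> 2" and "d \<ge> 2" and "gcd d n = 1"
  shows "Max (S_set d n) = n * d - n - d"
proof -
  define s where "s = (- n) mod d"
  have ns: "nstar d n = s" "1 \<le> s" "s \<le> d - 1" using nstar_eq[OF assms(2,3)] s_def by auto
  have S: "S_set d n = {s + int j * d | j :: nat. s + int j * d < n * (d - 1)}"
    unfolding S_set_def ns(1) ..
  have fin: "finite (S_set d n)"
  proof (rule finite_subset)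
    show "S_set d n \<subseteq> {s..<n * (d - 1)}" unfolding S using assms by auto
  qed simp
  have notboth: "\<not> (n = 2 \<and> d = 2)" using assms(3) by auto
  have pos: "n * d - n - d \<ge> 1"
  proof -
    have "(n - 1) * (d - 1) \<ge> 2"
    proof (cases "n = 2")
      case True then have "d \<ge> 3" using notboth assms by auto
      then show ?thesis using True by simp
    next
      case False then have "n - 1 \<ge> 2" using assms by auto
      moreover have "d - 1 \<ge> 1" using assms by auto
      ultimately show ?thesis by (metis mult_mono mult.right_neutral order_trans zero_le_one
            le_numeral_extra(1) dual_order.trans zero_le_numeral)
    qed
    then show ?thesis by (simp add: algebra_simps)
  qed
  have cong: "(n * d - n - d) mod d = s" unfolding s_def
  proof -
    have "n * d - n - d = - n + (n - 1) * d" by (simp add: algebra_simps)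
    then show "(n * d - n - d) mod d = (- n) mod d" by (simp only: mod_mult_self1)
  qed
  have dvd1: "d dvd (n * d - n - d - s)" using cong
    by (metis mod_eq_dvd_iff mod_mod_trivial)
  then obtain k where k: "n * d - n - d - s = d * k" by blast
  have kge: "k \<ge> 0"
  proof (rule ccontr)
    assume "\<not> k \<ge> 0" then have "k \<le> -1" by simp
    then have "d * k \<le> d * (-1)" using assms(2) by (intro mult_left_mono) auto
    then show False using k pos ns by simp
  qed
  have mem: "n * d - n - d \<in> S_set d n" unfolding S
  proof -
    have "n * d - n - d = s + int (nat k) * d" using k kge by (simp add: algebra_simps)
    moreover have "n * d - n - d < n * (d - 1)" using assms by (simp add: algebra_simps)
    ultimately show "n * d - n - d \<in> {s + int j * d | j :: nat. s + int j * d < n * (d - 1)}"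
      by (metis (mono_tags, lifting) mem_Collect_eq)
  qed
  have ub: "x \<le> n * d - n - d" if xS: "x \<in> S_set d n" for x
  proof -
    obtain j :: nat where j: "x = s + int j * d" "s + int j * d < n * (d - 1)"
      using xS unfolding S by auto
    have "d dvd (x + n)" using j(1) unfolding s_def
    proof -
      have "x + n = ((- n) mod d + n) + int j * d" using j(1) unfolding s_def by simp
      then have "(x + n) mod d = ((- n) mod d + n) mod d" by (simp only: mod_mult_self1)
      also have "... = (- n + n) mod d" by (simp add: mod_add_left_eq)
      finally show ?thesis by (simp add: dvd_eq_mod_eq_0)
    qed
    then obtain m where m: "x + n = d * m" by blast
    have "d * m < d * n" using m j by (simp add: algebra_simps)
    then have "m < n" using assms(2) by (simp add: mult_less_cancel_left)
    then have "m \<le> n - 1" by simp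
    then have "d * m \<le> d * (n - 1)" using assms(2) by (intro mult_left_mono) auto
    then show ?thesis using m by (simp add: algebra_simps)
  qed
  show ?thesis using fin mem ub by (intro Max_eqI) auto
qed

end
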